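(* With all notation and hypotheses as below, for every $(A_0,\dots,A_N)\in(X^* )^{N+1}$ and $(B_0,\dots,B_N)\in X^{N+1}$, define $C_0=u_NA_N$, $C_{N-i}-C_{N-i-1}=u_i(A_i-A_{i+1})$ for $i=0,\dots,N-1$ (with $A_{N+1}=0$), and $D_i=B_{N-i}$ for $i=0,\dots,N$. Then \[ \mathbf{U}_{\mathcal A}(A_0,\dots,A_N,B_0,\dots,B_N)=\mathbf{V}_{\mathcal B}(C_0,\dots,C_N,D_0,\dots,D_N), \] and the map $(A,B)\mapsto(C,D)$ is a bijection of $(X^* )^{N+1}\times X^{N+1}$ onto itself.
   Context: $X$ is a reflexive Banach space with norm $\|\cdot\|$, dual $X^*$ with dual norm $\|\cdot\|_*$ and pairing $\langle\cdot,\cdot\rangle$; $L>0$, $\sigma>0$, $N\ge1$; coefficients $\{a_{k,i}\}_{0\le i<k\le N}$, $\{b_{k,i}\}_{0\le i\le k\le N}$ are real with convention $b_{0,0}=-1$; $\{u_i\}_{i=0}^N$ is a positive nondecreasing real sequence and $v_i=1/u_{N-i}$. For $(A,B)$: $A_{N+1}=0$, $x_0=B_0$, $x_{k+1}=x_k-\sum_{i=0}^{k+1}b_{k+1,i}B_i$, and $\mathbf{U}_{\mathcal A}=\sum_{k=0}^{N-1}\frac{u_k}{2L}\|A_k-A_{k+1}\|_*^2+\sum_{k=0}^{N-1}\frac{\sigma}{2}\|B_k-B_{k+1}\|^2+\sum_{k=0}^{N-1}\langle\sum_{i=0}^{k}a_{k+1,i}A_i,B_{k+1}\rangle-\sum_{k=0}^{N}u_k\langle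 A_k-A_{k+1},x_k\rangle$. For $(C,D)$: $\mathbf{V}_{\mathcal B}=\sum_{k=0}^{N-1}\frac{v_{k+1}}{2L}\|C_k-C_{k+1}\|_*^2+\sum_{k=0}^{N-1}\frac{\sigma}{2}\|D_k-D_{k+1}\|^2+\sum_{k=0}^{N}\langle\sum_{i=0}^{k}b_{N-i,N-k}C_i,D_k\rangle+\sum_{k=0}^{N-1}\langle v_{k+1}C_{k+1}-\sum_{j=0}^{k}(v_{j+1}-v_j)C_j,\sum_{i=0}^{k}a_{N-i,N-1-k}D_i\rangle$. *)

theory Defs
  imports "HOL-Analysis.Analysis"
begin

text \<open>The dual space X* is modelled as the space of bounded linear functionals
  'x \<Rightarrow>L real with the operator norm (= dual norm); the pairing is application.\<close>

definition canon_embed :: "'x::real_normed_vector \<Rightarrow> (('x \<Rightarrow>\<^sub>L real) \<Rightarrow>\<^sub>L real)" where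
  "canon_embed x = Blinfun (\<lambda>f. blinfun_apply f x)"

definition reflexive_space :: "'x::real_normed_vector itself \<Rightarrow> bool" where
  "reflexive_space _ = surj (canon_embed :: 'x \<Rightarrow> _)"

definition pair :: "('x::real_normed_vector \<Rightarrow>\<^sub>L real) \<Rightarrow> 'x \<Rightarrow> real" where
  "pair f x = blinfun_apply f x"

fun xseq :: "(nat \<Rightarrow> nat \<Rightarrow> real) \<Rightarrow> (nat \<Rightarrow> 'x::real_normed_vector) \<Rightarrow> nat \<Rightarrow> 'x" where
  "xseq b B 0 = B 0"
| "xseq b B (Suc k) = xseq b B k - (\<Sum>i=0..Suc k. b (Suc k) i *\<^sub>R B i)"

definition vseq :: "(nat \<Rightarrow> real) \<Rightarrow> nat \<Rightarrow> nat \<Rightarrow> real" where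
  "vseq u N i = 1 / u (N - i)"

text \<open>Tuples indexed by {0..N}, represented by functions vanishing beyond N.\<close>
definition tuples :: "nat \<Rightarrow> ((nat \<Rightarrow> ('x::real_normed_vector \<Rightarrow>\<^sub>L real)) \<times> (nat \<Rightarrow> 'x)) set" where
  "tuples N = {(A, B). (\<forall>i>N. A i = 0) \<and> (\<forall>i>N. B i = 0)}"

definition UA :: "(nat \<Rightarrow> nat \<Rightarrow> real) \<Rightarrow> (nat \<Rightarrow> nat \<Rightarrow> real) \<Rightarrow> (nat \<Rightarrow> real) \<Rightarrow> real \<Rightarrow> real \<Rightarrow> nat
   \<Rightarrow> (nat \<Rightarrow> ('x::real_normed_vector \<Rightarrow>\<^sub>L real)) \<Rightarrow> (nat \<Rightarrow> 'x) \<Rightarrow> real" where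
  "UA a b u L \<sigma> N A B =
     (\<Sum>k<N. u k / (2 * L) * (norm (A k - A (Suc k)))\<^sup>2)
   + (\<Sum>k<N. \<sigma> / 2 * (norm (B k - B (Suc k)))\<^sup>2)
   + (\<Sum>k<N. pair (\<Sum>i=0..k. a (Suc k) i *\<^sub>R A i) (B (Suc k)))
   - (\<Sum>k=0..N. u k * pair (A k - A (Suc k)) (xseq b B k))"

definition VB :: "(nat \<Rightarrow> nat \<Rightarrow> real) \<Rightarrow> (nat \<Rightarrow> nat \<Rightarrow> real) \<Rightarrow> (nat \<Rightarrow> real) \<Rightarrow> real \<Rightarrow> real \<Rightarrow> nat
   \<Rightarrow> (nat \<Rightarrow> ('x::real_normed_vector \<Rightarrow>\<^sub>L real)) \<Rightarrow> (nat \<Rightarrow> 'x) \<Rightarrow> real" where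
  "VB a b u L \<sigma> N C D =
     (let v = vseq u N in
     (\<Sum>k<N. v (Suc k) / (2 * L) * (norm (C k - C (Suc k)))\<^sup>2)
   + (\<Sum>k<N. \<sigma> / 2 * (norm (D k - D (Suc k)))\<^sup>2)
   + (\<Sum>k=0..N. pair (\<Sum>i=0..k. b (N - i) (N - k) *\<^sub>R C i) (D k))
   + (\<Sum>k<N. pair (v (Suc k) *\<^sub>R C (Suc k) - (\<Sum>j=0..k. (v (Suc j) - v j) *\<^sub>R C j))
                   (\<Sum>i=0..k. a (N - i) (N - 1 - k) *\<^sub>R D i)))"

fun Crec :: "(nat \<Rightarrow> real) \<Rightarrow> nat \<Rightarrow> (nat \<Rightarrow> ('x::real_normed_vector \<Rightarrow>\<^sub>L real)) \<Rightarrow> nat \<Rightarrow> ('x \<Rightarrow>\<^sub>L real)" where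
  "Crec u N A 0 = u N *\<^sub>R A N"
| "Crec u N A (Suc j) = Crec u N A j + u (N - Suc j) *\<^sub>R (A (N - Suc j) - A (N - j))"

definition ABtoCD :: "(nat \<Rightarrow> real) \<Rightarrow> nat
   \<Rightarrow> (nat \<Rightarrow> ('x::real_normed_vector \<Rightarrow>\<^sub>L real)) \<times> (nat \<Rightarrow> 'x)
   \<Rightarrow> (nat \<Rightarrow> ('x \<Rightarrow>\<^sub>L real)) \<times> (nat \<Rightarrow> 'x)" where
  "ABtoCD u N AB =
     ((\<lambda>i. if i \<le> N then Crec u N (fst AB) i else 0),
      (\<lambda>i. if i \<le> N then snd AB (N - i) else 0))"

end

theory Submission
  imports Defs
begin

lemma ext0: "(b::nat) \<le> N \<Longrightarrow> (\<Sum>x=a..b. f x) = (\<Sum>x=0..N. if a \<le> x \<and> x \<le> b then f x else (0::real))" for a :: nat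
proof -
  assume "b \<le> N"
  have "{x\<in>{0..N}. a \<le> x \<and> x \<le> b} = {a..b}" using \<open>b \<le> N\<close> by auto
  moreover have "(\<Sum>x=0..N. if a \<le> x \<and> x \<le> b then f x else (0::real)) = sum f {x\<in>{0..N}. a \<le> x \<and> x \<le> b}"
    by (rule sum.inter_filter[symmetric]) simp
  ultimately show ?thesis by simp
qed

lemma if_sum: "(if c then sum f S else (0::real)) = sum (\<lambda>x. if c then f x else 0) S"
  by auto

lemma tri3:
  fixes G :: "nat \<Rightarrow> nat \<Rightarrow> nat \<Rightarrow> real"
  shows "(\<Sum>m=0..N. \<Sum>q=0..m. \<Sum>p=0..q. G m q p) = (\<Sum>p=0..N. \<Sum>q=p..N. \<Sum>m=q..N. G m q p)"
proof -
  have "(\<Sum>m=0..N. \<Sum>q=0..m. \<Sum>p=0..q. G m q p)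
     = (\<Sum>m=0..N. \<Sum>q=0..N. \<Sum>p=0..N. if p \<le> q \<and> q \<le> m then G m q p else 0)"
  proof (rule sum.cong[OF refl])
    fix m assume m: "m \<in> {0..N}"
    have "(\<Sum>q=0..m. \<Sum>p=0..q. G m q p) = (\<Sum>q=0..N. if 0 \<le> q \<and> q \<le> m then (\<Sum>p=0..q. G m q p) else 0)"
      using m by (intro ext0) auto
    also have "\<dots> = (\<Sum>q=0..N. \<Sum>p=0..N. if p \<le> q \<and> q \<le> m then G m q p else 0)"
    proof (rule sum.cong[OF refl])
      fix q assume q: "q \<in> {0..N}"
      show "(if 0 \<le> q \<and> q \<le> m then (\<Sum>p=0..q. G m q p) else 0) = (\<Sum>p=0..N. if p \<le> q \<and> q \<le> m then G m q p else 0)"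
      proof (cases "q \<le> m")
        case True
        then show ?thesis using q ext0[where b=q and N=N and a=0 and f="G m q"] by simp
      qed simp
    qed
    finally show "(\<Sum>q=0..m. \<Sum>p=0..q. G m q p) = (\<Sum>q=0..N. \<Sum>p=0..N. if p \<le> q \<and> q \<le> m then G m q p else 0)" .
  qed
  also have "\<dots> = (\<Sum>p=0..N. \<Sum>q=0..N. \<Sum>m=0..N. if p \<le> q \<and> q \<le> m then G m q p else 0)"
    apply (subst sum.swap)
    apply (subst (2) sum.swap)
    apply (subst sum.swap)
    by (rule refl)
  also have "\<dots> = (\<Sum>p=0..N. \<Sum>q=p..N. \<Sum>m=q..N. G m q p)"
  proof (rule sum.cong[OF refl])
    fix p assume p: "p \<in> {0..N}"
    have "(\<Sum>q=p..N. \<Sum>m=q..N. G m q p) = (\<Sum>q=0..N. if p \<le> q \<and> q \<le> N then (\<Sum>m=q..N. G m q p) else 0)"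
      by (intro ext0) auto
    also have "\<dots> = (\<Sum>q=0..N. \<Sum>m=0..N. if p \<le> q \<and> q \<le> m then G m q p else 0)"
    proof (rule sum.cong[OF refl])
      fix q assume q: "q \<in> {0..N}"
      show "(if p \<le> q \<and> q \<le> N then (\<Sum>m=q..N. G m q p) else 0) = (\<Sum>m=0..N. if p \<le> q \<and> q \<le> m then G m q p else 0)"
      proof (cases "p \<le> q")
        case True
        then show ?thesis using q ext0[where b=N and N=N and a=q and f="\<lambda>m. G m q p"] by simp
      qed simp
    qed
    finally show "(\<Sum>q=0..N. \<Sum>m=0..N. if p \<le> q \<and> q \<le> m then G m q p else 0) = (\<Sum>q=p..N. \<Sum>m=q..N. G m q p)" by (rule sym)
  qed
  finally show ?thesis .
qed


lemma xseq_closed: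
  assumes "b 0 0 = -1"
  shows "xseq b B k = - (\<Sum>l=0..k. \<Sum>i=0..l. b l i *\<^sub>R B i)"
  by (induction k) (simp_all add: assms)

lemma Crec_closed:
  assumes "A (Suc N) = 0" "j \<le> N"
  shows "Crec u N A j = (\<Sum>m=N-j..N. u m *\<^sub>R (A m - A (Suc m)))"
  using assms(2)
proof (induction j)
  case 0 then show ?case using assms(1) by simp
next
  case (Suc j)
  have e: "Suc (N - Suc j) = N - j" using Suc.prems by simp
  have "(\<Sum>m=N - Suc j..N. u m *\<^sub>R (A m - A (Suc m))) = u (N - Suc j) *\<^sub>R (A (N - Suc j) - A (Suc (N - Suc j))) + (\<Sum>m=Suc (N - Suc j)..N. u m *\<^sub>R (A m - A (Suc m)))"
    by (rule sum.atLeast_Suc_atMost) simp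
  then show ?case using Suc by (simp add: e)
qed

lemma E_lemma:
  assumes upos: "\<And>i. i \<le> N \<Longrightarrow> u i > 0" and "k < N"
  shows "vseq u N (Suc k) *\<^sub>R Crec u N A (Suc k) - (\<Sum>j=0..k. (vseq u N (Suc j) - vseq u N j) *\<^sub>R Crec u N A j) = A (N - Suc k)"
  using assms(2)
proof (induction k)
  case 0
  have u1: "u (N - 1) \<noteq> 0" "u N \<noteq> 0" using upos[of "N-1"] upos[of N] by auto
  have "vseq u N (Suc 0) *\<^sub>R Crec u N A (Suc 0) - (\<Sum>j=0..0. (vseq u N (Suc j) - vseq u N j) *\<^sub>R Crec u N A j)
     = vseq u N (Suc 0) *\<^sub>R (Crec u N A (Suc 0) - Crec u N A 0) + vseq u N 0 *\<^sub>R Crec u N A 0"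
    by (simp add: algebra_simps)
  also have "\<dots> = A (N - 1) - A N + A N"
    using u1 by (simp add: vseq_def scaleR_diff_right)
  finally show ?case by simp
next
  case (Suc k)
  let ?v = "vseq u N" and ?C = "Crec u N A"
  have u1: "u (N - Suc (Suc k)) \<noteq> 0" using upos[of "N - Suc (Suc k)"] by auto
  have e: "N - Suc k = Suc (N - Suc (Suc k))" using Suc.prems by simp
  have "?v (Suc (Suc k)) *\<^sub>R ?C (Suc (Suc k)) - (\<Sum>j=0..Suc k. (?v (Suc j) - ?v j) *\<^sub>R ?C j)
     = ?v (Suc (Suc k)) *\<^sub>R (?C (Suc (Suc k)) - ?C (Suc k)) + (?v (Suc k) *\<^sub>R ?C (Suc k) - (\<Sum>j=0..k. (?v (Suc j) - ?v j) *\<^sub>R ?C j))"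
    by (simp add: algebra_simps)
  also have "\<dots> = ?v (Suc (Suc k)) *\<^sub>R (?C (Suc (Suc k)) - ?C (Suc k)) + A (N - Suc k)"
    using Suc by simp
  also have "\<dots> = A (N - Suc (Suc k))"
    using u1 by (simp add: vseq_def scaleR_diff_right e)
  finally show ?case .
qed


lemma pair_sum_left: "pair (sum g S) x = (\<Sum>i\<in>S. pair (g i) x)"
  by (simp add: pair_def blinfun.sum_left)
lemma pair_sum_right: "pair f (sum g S) = (\<Sum>i\<in>S. pair f (g i))"
  by (simp add: pair_def blinfun.sum_right)
lemma pair_scaleR_left: "pair (r *\<^sub>R f) x = r * pair f x"
  by (simp add: pair_def blinfun.scaleR_left)
lemma pair_scaleR_right: "pair f (r *\<^sub>R x) = r * pair f x"
  by (simp add: pair_def blinfun.scaleR_right)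
lemma pair_minus_right: "pair f (- x) = - pair f x"
  by (simp add: pair_def blinfun.minus_right)

lemma main_identity:
  fixes A :: "nat \<Rightarrow> ('x::real_normed_vector \<Rightarrow>\<^sub>L real)" and B :: "nat \<Rightarrow> 'x"
  assumes A0: "\<forall>i>N. A i = 0" and B0: "\<forall>i>N. B i = 0" and b00: "b 0 0 = -1"
    and upos: "\<And>i. i \<le> N \<Longrightarrow> u i > 0"
  shows "UA a b u L \<sigma> N A B = VB a b u L \<sigma> N (fst (ABtoCD u N (A, B))) (snd (ABtoCD u N (A, B)))"
proof -
  define C where "C = Crec u N A"
  define Cf where "Cf = fst (ABtoCD u N (A, B))"
  define Df where "Df = snd (ABtoCD u N (A, B))"
  have Cf: "\<And>i. i \<le> N \<Longrightarrow> Cf i = C i" by (simp add: Cf_def C_def ABtoCD_def)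
  have Df: "\<And>i. i \<le> N \<Longrightarrow> Df i = B (N - i)" by (simp add: Df_def ABtoCD_def)
  have ASN: "A (Suc N) = 0" using A0 by simp
  have Cdiff: "C k - C (Suc k) = - (u (N - Suc k) *\<^sub>R (A (N - Suc k) - A (Suc (N - Suc k))))" if "k < N" for k
    using that by (simp add: C_def Suc_diff_Suc)
  have T1: "(\<Sum>k<N. vseq u N (Suc k) / (2*L) * (norm (Cf k - Cf (Suc k)))\<^sup>2) = (\<Sum>k<N. u k / (2*L) * (norm (A k - A (Suc k)))\<^sup>2)"
  proof -
    have "(\<Sum>k<N. vseq u N (Suc k) / (2*L) * (norm (Cf k - Cf (Suc k)))\<^sup>2) = (\<Sum>k<N. (\<lambda>i. u i / (2*L) * (norm (A i - A (Suc i)))\<^sup>2) (N - Suc k))"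
    proof (rule sum.cong[OF refl])
      fix k assume k: "k \<in> {..<N}"
      have up: "u (N - Suc k) > 0" using upos by simp
      show "vseq u N (Suc k) / (2*L) * (norm (Cf k - Cf (Suc k)))\<^sup>2 = (\<lambda>i. u i / (2*L) * (norm (A i - A (Suc i)))\<^sup>2) (N - Suc k)"
        using k up by (simp add: Cf Cdiff vseq_def power2_eq_square)
    qed
    also have "\<dots> = (\<Sum>k<N. u k / (2*L) * (norm (A k - A (Suc k)))\<^sup>2)" by (rule sum.nat_diff_reindex)
    finally show ?thesis .
  qed
  have T2: "(\<Sum>k<N. \<sigma> / 2 * (norm (Df k - Df (Suc k)))\<^sup>2) = (\<Sum>k<N. \<sigma> / 2 * (norm (B k - B (Suc k)))\<^sup>2)"
  proof -
    have "(\<Sum>k<N. \<sigma> / 2 * (norm (Df k - Df (Suc k)))\<^sup>2) = (\<Sum>k<N. (\<lambda>i. \<sigma> / 2 * (norm (B i - B (Suc i)))\<^sup>2) (N - Suc k))"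
    proof (rule sum.cong[OF refl])
      fix k assume k: "k \<in> {..<N}"
      then have e: "Suc (N - Suc k) = N - k" by simp
      show "\<sigma> / 2 * (norm (Df k - Df (Suc k)))\<^sup>2 = (\<lambda>i. \<sigma> / 2 * (norm (B i - B (Suc i)))\<^sup>2) (N - Suc k)"
        using k by (simp add: Df e norm_minus_commute)
    qed
    also have "\<dots> = (\<Sum>k<N. \<sigma> / 2 * (norm (B k - B (Suc k)))\<^sup>2)" by (rule sum.nat_diff_reindex)
    finally show ?thesis .
  qed
  have V4vec: "vseq u N (Suc k) *\<^sub>R Cf (Suc k) - (\<Sum>j=0..k. (vseq u N (Suc j) - vseq u N j) *\<^sub>R Cf j) = A (N - Suc k)"
    if k: "k < N" for k
  proof -
    have "(\<Sum>j=0..k. (vseq u N (Suc j) - vseq u N j) *\<^sub>R Cf j) = (\<Sum>j=0..k. (vseq u N (Suc j) - vseq u N j) *\<^sub>R C j)"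
      using k by (intro sum.cong) (auto simp: Cf)
    then show ?thesis using k E_lemma[OF upos k, where A=A] by (simp add: Cf C_def)
  qed
  have T4: "(\<Sum>k<N. pair (vseq u N (Suc k) *\<^sub>R Cf (Suc k) - (\<Sum>j=0..k. (vseq u N (Suc j) - vseq u N j) *\<^sub>R Cf j))
                   (\<Sum>i=0..k. a (N - i) (N - 1 - k) *\<^sub>R Df i))
          = (\<Sum>k<N. pair (\<Sum>i=0..k. a (Suc k) i *\<^sub>R A i) (B (Suc k)))"
  proof -
    have "(\<Sum>k<N. pair (vseq u N (Suc k) *\<^sub>R Cf (Suc k) - (\<Sum>j=0..k. (vseq u N (Suc j) - vseq u N j) *\<^sub>R Cf j))
                   (\<Sum>i=0..k. a (N - i) (N - 1 - k) *\<^sub>R Df i))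
        = (\<Sum>k<N. (\<lambda>m. \<Sum>i=0..N - Suc m. a (N - i) m * pair (A m) (B (N - i))) (N - Suc k))"
    proof (rule sum.cong[OF refl])
      fix k assume k: "k \<in> {..<N}"
      have e: "N - Suc (N - Suc k) = k" using k by auto
      have "(\<Sum>i=0..k. a (N - i) (N - 1 - k) *\<^sub>R Df i) = (\<Sum>i=0..k. a (N - i) (N - Suc k) *\<^sub>R B (N - i))"
        using k by (intro sum.cong) (auto simp: Df)
      then show "pair (vseq u N (Suc k) *\<^sub>R Cf (Suc k) - (\<Sum>j=0..k. (vseq u N (Suc j) - vseq u N j) *\<^sub>R Cf j))
                   (\<Sum>i=0..k. a (N - i) (N - 1 - k) *\<^sub>R Df i) = (\<lambda>m. \<Sum>i=0..N - Suc m. a (N - i) m * pair (A m) (B (N - i))) (N - Suc k)"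
        using k by (simp add: V4vec e pair_sum_right pair_scaleR_right)
    qed
    also have "\<dots> = (\<Sum>m<N. \<Sum>i=0..N - Suc m. a (N - i) m * pair (A m) (B (N - i)))"
      by (rule sum.nat_diff_reindex)
    also have "\<dots> = (\<Sum>m<N. \<Sum>j=Suc m..N. a j m * pair (A m) (B j))"
    proof (rule sum.cong[OF refl])
      fix m assume m: "m \<in> {..<N}"
      show "(\<Sum>i=0..N - Suc m. a (N - i) m * pair (A m) (B (N - i))) = (\<Sum>j=Suc m..N. a j m * pair (A m) (B j))"
        by (rule sum.reindex_bij_witness[where i="\<lambda>i. N - i" and j="\<lambda>i. N - i"]) (use m in auto)
    qed
    also have "\<dots> = (\<Sum>j\<in>{..N}. \<Sum>m<j. a j m * pair (A m) (B j))"
      by (rule sum.nested_swap'[symmetric])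
    also have "\<dots> = (\<Sum>k<N. \<Sum>i=0..k. a (Suc k) i * pair (A i) (B (Suc k)))"
      by (simp add: sum.atMost_shift lessThan_Suc_atMost atLeast0AtMost)
    also have "\<dots> = (\<Sum>k<N. pair (\<Sum>i=0..k. a (Suc k) i *\<^sub>R A i) (B (Suc k)))"
      by (simp add: pair_sum_left pair_scaleR_left)
    finally show ?thesis .
  qed
  define P where "P m p = u m * pair (A m - A (Suc m)) (B p)" for m p
  have T3: "(\<Sum>k=0..N. pair (\<Sum>i=0..k. b (N - i) (N - k) *\<^sub>R Cf i) (Df k))
          = - (\<Sum>k=0..N. u k * pair (A k - A (Suc k)) (xseq b B k))"
  proof -
    have "(\<Sum>k=0..N. pair (\<Sum>i=0..k. b (N - i) (N - k) *\<^sub>R Cf i) (Df k))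
        = (\<Sum>k=0..N. (\<lambda>p. \<Sum>i=0..N - p. b (N - i) p * (\<Sum>m=N - i..N. P m p)) (N - k))"
    proof (rule sum.cong[OF refl])
      fix k assume k: "k \<in> {0..N}"
      have e: "N - (N - k) = k" using k by auto
      have "(\<Sum>i=0..k. b (N - i) (N - k) *\<^sub>R Cf i) = (\<Sum>i=0..k. b (N - i) (N - k) *\<^sub>R (\<Sum>m=N - i..N. u m *\<^sub>R (A m - A (Suc m))))"
        using k by (intro sum.cong) (auto simp: Cf C_def Crec_closed[where A=A and N=N, OF ASN])
      then show "pair (\<Sum>i=0..k. b (N - i) (N - k) *\<^sub>R Cf i) (Df k) = (\<lambda>p. \<Sum>i=0..N - p. b (N - i) p * (\<Sum>m=N - i..N. P m p)) (N - k)"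
        using k by (simp add: e Df P_def pair_sum_left pair_scaleR_left)
    qed
    also have "\<dots> = (\<Sum>p=0..N. \<Sum>i=0..N - p. b (N - i) p * (\<Sum>m=N - i..N. P m p))"
      by (rule sum.reindex_bij_witness[where i="\<lambda>i. N - i" and j="\<lambda>i. N - i"]) auto
    also have "\<dots> = (\<Sum>p=0..N. \<Sum>q=p..N. \<Sum>m=q..N. b q p * P m p)"
    proof (rule sum.cong[OF refl])
      fix p assume p: "p \<in> {0..N}"
      have "(\<Sum>i=0..N - p. b (N - i) p * (\<Sum>m=N - i..N. P m p)) = (\<Sum>q=p..N. b q p * (\<Sum>m=q..N. P m p))"
        by (rule sum.reindex_bij_witness[where i="\<lambda>i. N - i" and j="\<lambda>i. N - i"]) (use p in auto)
      then show "(\<Sum>i=0..N - p. b (N - i) p * (\<Sum>m=N - i..N. P m p)) = (\<Sum>q=p..N. \<Sum>m=q..N. b q p * P m p)"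
        by (simp add: sum_distrib_left)
    qed
    also have "\<dots> = (\<Sum>m=0..N. \<Sum>q=0..m. \<Sum>p=0..q. b q p * P m p)"
      by (rule tri3[symmetric])
    also have "\<dots> = - (\<Sum>k=0..N. u k * pair (A k - A (Suc k)) (xseq b B k))"
      by (simp add: xseq_closed[where b=b, OF b00] P_def pair_sum_right pair_scaleR_right pair_minus_right
          sum_distrib_left sum_negf algebra_simps)
    finally show ?thesis .
  qed
  show ?thesis
    unfolding UA_def VB_def Let_def Cf_def[symmetric] Df_def[symmetric]
    using T1 T2 T3 T4 by simp
qed


fun Ainv :: "(nat \<Rightarrow> real) \<Rightarrow> nat \<Rightarrow> (nat \<Rightarrow> 'a::real_vector) \<Rightarrow> nat \<Rightarrow> 'a" where
  "Ainv u N C 0 = (1 / u N) *\<^sub>R C 0"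
| "Ainv u N C (Suc j) = Ainv u N C j + (1 / u (N - Suc j)) *\<^sub>R (C (Suc j) - C j)"

lemma Ainv_Crec:
  assumes upos: "\<And>i. i \<le> N \<Longrightarrow> u i > 0" and Cf: "\<And>i. i \<le> N \<Longrightarrow> Cf i = Crec u N A i"
  shows "j \<le> N \<Longrightarrow> Ainv u N Cf j = A (N - j)"
proof (induction j)
  case 0
  have "u N \<noteq> 0" using upos[of N] by simp
  then show ?case using Cf[of 0] by simp
next
  case (Suc j)
  have "u (N - Suc j) \<noteq> 0" using upos[of "N - Suc j"] by simp
  moreover have "N - j = Suc (N - Suc j)" using Suc.prems by simp
  ultimately show ?case using Suc Cf[of j] Cf[of "Suc j"] by (simp add: scaleR_diff_right)
qed

lemma Crec_Ainv:
  assumes upos: "\<And>i. i \<le> N \<Longrightarrow> u i > 0" and Ai: "\<And>i. i \<le> N \<Longrightarrow> A i = Ainv u N C (N - i)"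
  shows "j \<le> N \<Longrightarrow> Crec u N A j = C j"
proof (induction j)
  case 0
  have "u N \<noteq> 0" using upos[of N] by simp
  then show ?case using Ai[of N] by simp
next
  case (Suc j)
  have "u (N - Suc j) \<noteq> 0" using upos[of "N - Suc j"] by simp
  moreover have "N - (N - Suc j) = Suc j" "N - (N - j) = j" using Suc.prems by auto
  ultimately show ?case using Suc Ai[of "N - Suc j"] Ai[of "N - j"] by (simp add: scaleR_diff_right)
qed

lemma bij_part:
  assumes upos: "\<And>i. i \<le> N \<Longrightarrow> u i > 0"
  shows "bij_betw (ABtoCD u N) (tuples N :: ((nat \<Rightarrow> ('x::real_normed_vector \<Rightarrow>\<^sub>L real)) \<times> (nat \<Rightarrow> 'x)) set) (tuples N)"
proof -
  define g :: "(nat \<Rightarrow> ('x \<Rightarrow>\<^sub>L real)) \<times> (nat \<Rightarrow> 'x) \<Rightarrow> (nat \<Rightarrow> ('x \<Rightarrow>\<^sub>L real)) \<times> (nat \<Rightarrow> 'x)"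
    where "g CD = ((\<lambda>i. if i \<le> N then Ainv u N (fst CD) (N - i) else 0),
                  (\<lambda>i. if i \<le> N then snd CD (N - i) else 0))" for CD
  have h1: "\<forall>a\<in>tuples N. g (ABtoCD u N a) = a"
  proof
    fix AB :: "(nat \<Rightarrow> ('x \<Rightarrow>\<^sub>L real)) \<times> (nat \<Rightarrow> 'x)" assume "AB \<in> tuples N"
    then obtain A B where AB: "AB = (A, B)" "\<forall>i>N. A i = 0" "\<forall>i>N. B i = 0" by (auto simp: tuples_def)
    have 1: "(\<lambda>i. if i \<le> N then Ainv u N (fst (ABtoCD u N AB)) (N - i) else 0) = A"
    proof
      fix i show "(if i \<le> N then Ainv u N (fst (ABtoCD u N AB)) (N - i) else 0) = A i"
      proof (cases "i \<le> N")
        case True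
        have "Ainv u N (fst (ABtoCD u N AB)) (N - i) = A (N - (N - i))"
          by (rule Ainv_Crec[OF upos]) (auto simp: AB ABtoCD_def)
        then show ?thesis using True by simp
      qed (use AB in auto)
    qed
    have 2: "(\<lambda>i. if i \<le> N then snd (ABtoCD u N AB) (N - i) else 0) = B"
      using AB by (auto simp: ABtoCD_def)
    show "g (ABtoCD u N AB) = AB"
      unfolding g_def 1 2 using AB(1) by simp
  qed
  have h2: "\<forall>a'\<in>tuples N. ABtoCD u N (g a') = a'"
  proof
    fix CD :: "(nat \<Rightarrow> ('x \<Rightarrow>\<^sub>L real)) \<times> (nat \<Rightarrow> 'x)" assume "CD \<in> tuples N"
    then obtain C D where CD: "CD = (C, D)" "\<forall>i>N. C i = 0" "\<forall>i>N. D i = 0" by (auto simp: tuples_def)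
    let ?A = "\<lambda>i. if i \<le> N then Ainv u N C (N - i) else 0"
    have 1: "(\<lambda>i. if i \<le> N then Crec u N ?A i else 0) = C"
    proof
      fix i show "(if i \<le> N then Crec u N ?A i else 0) = C i"
      proof (cases "i \<le> N")
        case True
        have "Crec u N ?A i = C i" by (rule Crec_Ainv[OF upos]) (use True in auto)
        then show ?thesis using True by simp
      qed (use CD in auto)
    qed
    have 2: "(\<lambda>i. if i \<le> N then (if N - i \<le> N then D (N - (N - i)) else 0) else 0) = D"
      using CD by (auto simp: fun_eq_iff)
    have gCD: "g CD = (?A, \<lambda>i. if i \<le> N then D (N - i) else 0)" unfolding g_def CD(1) fst_conv snd_conv by (rule refl)
    show "ABtoCD u N (g CD) = CD"
      unfolding gCD ABtoCD_def fst_conv snd_conv 1 using 2 CD(1) by simp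
  qed
  have h3: "ABtoCD u N ` tuples N \<subseteq> tuples N" by (auto simp: ABtoCD_def tuples_def)
  have h4: "g ` tuples N \<subseteq> tuples N" by (auto simp: tuples_def g_def)
  show ?thesis by (rule bij_betw_byWitness[OF h1 h2 h3 h4])
qed

theorem mainTheorem3:
  fixes a b :: "nat \<Rightarrow> nat \<Rightarrow> real" and u :: "nat \<Rightarrow> real"
    and L \<sigma> :: real and N :: nat
  assumes "reflexive_space TYPE('x::banach)"
    and "L > 0" and "\<sigma> > 0" and "N \<ge> 1"
    and "b 0 0 = -1"
    and "\<And>i. i \<le> N \<Longrightarrow> u i > 0"
    and "\<And>i j. i \<le> j \<Longrightarrow> j \<le> N \<Longrightarrow> u i \<le> u j"
  shows "(\<forall>A B. (A, B) \<in> (tuples N :: ((nat \<Rightarrow> ('x \<Rightarrow>\<^sub>L real)) \<times> (nat \<Rightarrow> 'x)) set) \<longrightarrow>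
            UA a b u L \<sigma> N A B = VB a b u L \<sigma> N (fst (ABtoCD u N (A, B))) (snd (ABtoCD u N (A, B))))
       \<and> bij_betw (ABtoCD u N) (tuples N :: ((nat \<Rightarrow> ('x \<Rightarrow>\<^sub>L real)) \<times> (nat \<Rightarrow> 'x)) set) (tuples N)"
proof
  show "\<forall>A B. (A, B) \<in> (tuples N :: ((nat \<Rightarrow> ('x \<Rightarrow>\<^sub>L real)) \<times> (nat \<Rightarrow> 'x)) set) \<longrightarrow>
            UA a b u L \<sigma> N A B = VB a b u L \<sigma> N (fst (ABtoCD u N (A, B))) (snd (ABtoCD u N (A, B)))"
    using main_identity[where b=b, OF _ _ assms(5) assms(6)] by (auto simp: tuples_def)
  show "bij_betw (ABtoCD u N) (tuples N :: ((nat \<Rightarrow> ('x \<Rightarrow>\<^sub>L real)) \<times> (nat \<Rightarrow> 'x)) set) (tuples N)"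
    by (rule bij_part[OF assms(6)])
qed

end
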